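(* Let $\kappa$ be a regular uncountable cardinal. Every proper pleasant ideal on $\kappa$ is subnormal, i.e. is contained in some proper normal ideal on $\kappa$.
   Context: An ideal on $\kappa$ is a family of subsets of $\kappa$ closed under subsets and finite unions, which is $<\kappa$-complete and contains all singletons (so it contains all subsets of size $<\kappa$). It is proper if $\kappa\notin I$. For $A\subseteq\kappa$ and $X_\alpha\subseteq\kappa$, $\bigtriangledown_{\alpha\in A}X_\alpha=\{\xi<\kappa:\exists\alpha<\xi\,(\alpha\in A\wedge \xi\in X_\alpha)\}$. $I$ is normal if $X_\alpha\in I$ for all $\alpha<\kappa$ implies $\bigtriangledown_{\alpha<\kappa}X_\alpha\in I$ (diagonal union with $A=\kappa$). $I$ is pleasant if whenever $A\in I$ and $X_\alpha\in I$ for all $\alpha$, then $\bigtriangledown_{\alpha\in A}X_\alpha\in I$. *)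

theory Defs
  imports Main "HOL-Library.Countable_Set"
begin

text \<open>The cardinal kappa is represented by a cardinal-order relation r (a well-order
  of Field r that is minimal for its cardinality); kappa is identified with Field r and
  alpha < xi means (alpha, xi) in r with alpha different from xi.\<close>

definition is_ideal :: "'a rel \<Rightarrow> 'a set set \<Rightarrow> bool" where
  "is_ideal r I \<longleftrightarrow>
     (\<forall>A\<in>I. A \<subseteq> Field r) \<and>
     (\<forall>A B. A \<in> I \<and> B \<subseteq> A \<longrightarrow> B \<in> I) \<and>
     (\<forall>A B. A \<in> I \<and> B \<in> I \<longrightarrow> A \<union> B \<in> I) \<and>
     (\<forall>F. F \<subseteq> I \<and> (card_of F, r) \<in> ordLess \<longrightarrow> \<Union>F \<in> I) \<and>
     (\<forall>x\<in>Field r. {x} \<in> I)"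

definition proper_ideal :: "'a rel \<Rightarrow> 'a set set \<Rightarrow> bool" where
  "proper_ideal r I \<longleftrightarrow> is_ideal r I \<and> Field r \<notin> I"

definition diag_union :: "'a rel \<Rightarrow> 'a set \<Rightarrow> ('a \<Rightarrow> 'a set) \<Rightarrow> 'a set" where
  "diag_union r A X = {\<xi> \<in> Field r. \<exists>\<alpha>. (\<alpha>, \<xi>) \<in> r \<and> \<alpha> \<noteq> \<xi> \<and> \<alpha> \<in> A \<and> \<xi> \<in> X \<alpha>}"

definition normal_ideal :: "'a rel \<Rightarrow> 'a set set \<Rightarrow> bool" where
  "normal_ideal r I \<longleftrightarrow> is_ideal r I \<and>
     (\<forall>X. (\<forall>\<alpha>\<in>Field r. X \<alpha> \<in> I) \<longrightarrow> diag_union r (Field r) X \<in> I)"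

definition pleasant_ideal :: "'a rel \<Rightarrow> 'a set set \<Rightarrow> bool" where
  "pleasant_ideal r I \<longleftrightarrow> is_ideal r I \<and>
     (\<forall>A X. A \<in> I \<and> (\<forall>\<alpha>\<in>Field r. X \<alpha> \<in> I) \<longrightarrow> diag_union r A X \<in> I)"

definition subnormal_ideal :: "'a rel \<Rightarrow> 'a set set \<Rightarrow> bool" where
  "subnormal_ideal r I \<longleftrightarrow> (\<exists>J. proper_ideal r J \<and> normal_ideal r J \<and> I \<subseteq> J)"

end

theory Submission imports Defs begin
context includes cardinal_syntax begin

lemma ideal_Un: "is_ideal r I \<Longrightarrow> A \<in> I \<Longrightarrow> B \<in> I \<Longrightarrow> A \<union> B \<in> I"
  unfolding is_ideal_def by (elim conjE) simp
lemma ideal_sub: "is_ideal r I \<Longrightarrow> A \<in> I \<Longrightarrow> B \<subseteq> A \<Longrightarrow> B \<in> I"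
  unfolding is_ideal_def by (elim conjE) metis
lemma ideal_single: "is_ideal r I \<Longrightarrow> x \<in> Field r \<Longrightarrow> {x} \<in> I"
  unfolding is_ideal_def by (elim conjE) simp
lemma ideal_Field: "is_ideal r I \<Longrightarrow> A \<in> I \<Longrightarrow> A \<subseteq> Field r"
  unfolding is_ideal_def by (elim conjE) simp
lemma ideal_Union: "is_ideal r I \<Longrightarrow> F \<subseteq> I \<Longrightarrow> |F| <o r \<Longrightarrow> \<Union>F \<in> I"
  unfolding is_ideal_def by (elim conjE) simp

lemma ideal_UN:
  assumes "is_ideal r I" "|S| <o r" "\<forall>s\<in>S. f s \<in> I"
  shows "(\<Union>s\<in>S. f s) \<in> I"
proof -
  have "|f ` S| <o r" using assms(2) card_of_image ordLeq_ordLess_trans by blast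
  moreover have "f ` S \<subseteq> I" using assms(3) by auto
  ultimately show ?thesis using ideal_Union[OF assms(1)] by blast
qed

lemma under_small:
  assumes "Card_order r" "\<not> finite (Field r)" "a \<in> Field r"
  shows "|insert a (underS r a)| <o r"
proof -
  have "|{a}| <o r"
    using finite_ordLess_infinite[of "|{a}|" r] card_of_Well_order[of "{a}"] card_order_on_well_order_on[OF assms(1)] assms(2) by (simp add: Field_card_of)
  then have "|{a} \<union> underS r a| <o r" using card_of_Un_ordLess_infinite_Field[OF assms(2,1) _ card_of_underS[OF assms(1,3)]]
    by blast
  then show ?thesis by simp
qed

lemma countable_small:
  assumes "Card_order r" "\<not> countable (Field r)" "countable S"
  shows "|S| <o r"
proof -
  have "|S| \<le>o |UNIV::nat set|" using assms(3) unfolding countable_def card_of_ordLeq[symmetric] by auto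
  moreover have "\<not> |Field r| \<le>o |UNIV::nat set|" using assms(2) unfolding countable_def card_of_ordLeq[symmetric] by auto
  hence "|UNIV::nat set| <o |Field r|" using not_ordLeq_iff_ordLess[OF card_of_Well_order card_of_Well_order] by blast
  ultimately have "|S| <o |Field r|" by (rule ordLeq_ordLess_trans)
  then show ?thesis using card_of_Field_ordIso[OF assms(1)] by (rule ordLess_ordIso_trans)
qed


definition nclos :: "'a rel \<Rightarrow> 'a set set \<Rightarrow> 'a set set" where
  "nclos r I = {Y. Y \<subseteq> Field r \<and> (\<exists>B\<in>I. \<exists>X. (\<forall>\<alpha>\<in>Field r. X \<alpha> \<in> I) \<and> Y \<subseteq> B \<union> diag_union r (Field r) X)}"

lemma nclosI: "Y \<subseteq> Field r \<Longrightarrow> B \<in> I \<Longrightarrow> \<forall>\<alpha>\<in>Field r. X \<alpha> \<in> I \<Longrightarrow> Y \<subseteq> B \<union> diag_union r (Field r) X \<Longrightarrow> Y \<in> nclos r I"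
  unfolding nclos_def by (intro CollectI conjI bexI[of _ B] exI[of _ X]) simp_all

lemma nclosE:
  assumes "Y \<in> nclos r I"
  obtains B X where "Y \<subseteq> Field r" "B \<in> I" "\<forall>\<alpha>\<in>Field r. X \<alpha> \<in> I" "Y \<subseteq> B \<union> diag_union r (Field r) X"
  using assms unfolding nclos_def mem_Collect_eq by (elim conjE bexE exE) (rule that)

lemma diag_mono: "(\<And>\<alpha>. \<alpha> \<in> A \<Longrightarrow> X \<alpha> \<subseteq> X' \<alpha>) \<Longrightarrow> diag_union r A X \<subseteq> diag_union r A X'"
  unfolding diag_union_def by blast

lemma nclos_ideal:
  assumes I: "is_ideal r I" and C: "Card_order r" and inf: "\<not> finite (Field r)"
  shows "is_ideal r (nclos r I)"
  unfolding is_ideal_def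
proof (intro conjI allI impI ballI)
  fix A assume "A \<in> nclos r I" then show "A \<subseteq> Field r" by (elim nclosE)
next
  fix A B assume h: "A \<in> nclos r I \<and> B \<subseteq> A"
  then have "A \<in> nclos r I" by blast
  then obtain B1 X1 where "A \<subseteq> Field r" "B1 \<in> I" "\<forall>\<alpha>\<in>Field r. X1 \<alpha> \<in> I" "A \<subseteq> B1 \<union> diag_union r (Field r) X1"
    by (rule nclosE)
  then show "B \<in> nclos r I" using h by (intro nclosI[of _ _ B1 _ X1]) auto
next
  fix A B assume "A \<in> nclos r I \<and> B \<in> nclos r I"
  then obtain B1 X1 B2 X2 where h: "A \<subseteq> Field r" "B \<subseteq> Field r" "B1 \<in> I" "B2 \<in> I"
    "\<forall>\<alpha>\<in>Field r. X1 \<alpha> \<in> I" "\<forall>\<alpha>\<in>Field r. X2 \<alpha> \<in> I"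
    "A \<subseteq> B1 \<union> diag_union r (Field r) X1" "B \<subseteq> B2 \<union> diag_union r (Field r) X2"
    by (elim conjE nclosE) blast
  have "B1 \<union> B2 \<in> I" using ideal_Un[OF I h(3,4)] .
  moreover have "\<forall>\<alpha>\<in>Field r. X1 \<alpha> \<union> X2 \<alpha> \<in> I" using ideal_Un[OF I] h(5,6) by blast
  moreover have "A \<union> B \<subseteq> (B1 \<union> B2) \<union> diag_union r (Field r) (\<lambda>\<alpha>. X1 \<alpha> \<union> X2 \<alpha>)"
  proof -
    have "diag_union r (Field r) X1 \<subseteq> diag_union r (Field r) (\<lambda>\<alpha>. X1 \<alpha> \<union> X2 \<alpha>)"
      "diag_union r (Field r) X2 \<subseteq> diag_union r (Field r) (\<lambda>\<alpha>. X1 \<alpha> \<union> X2 \<alpha>)"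
      by (rule diag_mono, blast)+
    then show ?thesis using h(7,8) by blast
  qed
  ultimately show "A \<union> B \<in> nclos r I" using h(1,2) by (intro nclosI) auto
next
  fix F assume F: "F \<subseteq> nclos r I \<and> |F| <o r"
  have H: "\<forall>Y\<in>F. \<exists>p. fst p \<in> I \<and> (\<forall>\<alpha>\<in>Field r. snd p \<alpha> \<in> I) \<and> Y \<subseteq> fst p \<union> diag_union r (Field r) (snd p)"
  proof
    fix Y assume "Y \<in> F"
    then have "Y \<in> nclos r I" using F by blast
    then obtain B X where "B \<in> I" "\<forall>\<alpha>\<in>Field r. X \<alpha> \<in> I" "Y \<subseteq> B \<union> diag_union r (Field r) X"
      by (rule nclosE)
    then show "\<exists>p. fst p \<in> I \<and> (\<forall>\<alpha>\<in>Field r. snd p \<alpha> \<in> I) \<and> Y \<subseteq> fst p \<union> diag_union r (Field r) (snd p)"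
      by (intro exI[of _ "(B, X)"]) simp
  qed
  obtain g where g: "\<forall>Y\<in>F. fst (g Y) \<in> I \<and> (\<forall>\<alpha>\<in>Field r. snd (g Y) \<alpha> \<in> I) \<and> Y \<subseteq> fst (g Y) \<union> diag_union r (Field r) (snd (g Y))"
    using bchoice[OF H] by (elim exE) (rule that)
  have "(\<Union>Y\<in>F. fst (g Y)) \<in> I" using ideal_UN[OF I, of F "\<lambda>Y. fst (g Y)"] F g by blast
  moreover have "\<forall>\<alpha>\<in>Field r. (\<Union>Y\<in>F. snd (g Y) \<alpha>) \<in> I"
  proof
    fix \<alpha> assume "\<alpha> \<in> Field r"
    then show "(\<Union>Y\<in>F. snd (g Y) \<alpha>) \<in> I" using ideal_UN[OF I, of F "\<lambda>Y. snd (g Y) \<alpha>"] F g by blast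
  qed
  moreover have "\<Union>F \<subseteq> (\<Union>Y\<in>F. fst (g Y)) \<union> diag_union r (Field r) (\<lambda>\<alpha>. \<Union>Y\<in>F. snd (g Y) \<alpha>)"
  proof
    fix y assume "y \<in> \<Union>F"
    then obtain Y where Y: "Y \<in> F" "y \<in> Y" by blast
    have "diag_union r (Field r) (snd (g Y)) \<subseteq> diag_union r (Field r) (\<lambda>\<alpha>. \<Union>Y\<in>F. snd (g Y) \<alpha>)"
      using Y(1) by (intro diag_mono) blast
    moreover have "fst (g Y) \<subseteq> (\<Union>Y\<in>F. fst (g Y))" using Y(1) by blast
    moreover have "y \<in> fst (g Y) \<union> diag_union r (Field r) (snd (g Y))" using g Y by blast
    ultimately show "y \<in> (\<Union>Y\<in>F. fst (g Y)) \<union> diag_union r (Field r) (\<lambda>\<alpha>. \<Union>Y\<in>F. snd (g Y) \<alpha>)" by blast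
  qed
  moreover have "\<Union>F \<subseteq> Field r"
  proof
    fix y assume "y \<in> \<Union>F"
    then obtain Y where Y: "Y \<in> F" "y \<in> Y" by blast
    then have "Y \<in> nclos r I" using F by blast
    then have "Y \<subseteq> Field r" by (elim nclosE)
    then show "y \<in> Field r" using Y by blast
  qed
  ultimately show "\<Union>F \<in> nclos r I" by (rule nclosI[rotated])
next
  fix x assume x: "x \<in> Field r"
  have "{x} \<in> I" using ideal_single[OF I x] .
  moreover have "\<forall>\<alpha>\<in>Field r. {x} \<in> I" using ideal_single[OF I x] by blast
  ultimately show "{x} \<in> nclos r I" using x by (intro nclosI[of _ _ "{x}" _ "\<lambda>_. {x}"]) auto
qed

lemma nclos_normal:
  assumes I: "is_ideal r I" and C: "Card_order r" and inf: "\<not> finite (Field r)"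
  shows "normal_ideal r (nclos r I)"
  unfolding normal_ideal_def
proof (intro conjI allI impI)
  show "is_ideal r (nclos r I)" by (rule nclos_ideal[OF assms])
next
  fix X assume X: "\<forall>\<alpha>\<in>Field r. X \<alpha> \<in> nclos r I"
  have W: "Well_order r" using card_order_on_well_order_on[OF C] .
  have H: "\<forall>\<alpha>\<in>Field r. \<exists>p. fst p \<in> I \<and> (\<forall>\<beta>\<in>Field r. snd p \<beta> \<in> I) \<and> X \<alpha> \<subseteq> fst p \<union> diag_union r (Field r) (snd p)"
  proof
    fix \<alpha> assume "\<alpha> \<in> Field r"
    then have "X \<alpha> \<in> nclos r I" using X by blast
    then obtain B Y where "B \<in> I" "\<forall>\<beta>\<in>Field r. Y \<beta> \<in> I" "X \<alpha> \<subseteq> B \<union> diag_union r (Field r) Y"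
      by (rule nclosE)
    then show "\<exists>p. fst p \<in> I \<and> (\<forall>\<beta>\<in>Field r. snd p \<beta> \<in> I) \<and> X \<alpha> \<subseteq> fst p \<union> diag_union r (Field r) (snd p)"
      by (intro exI[of _ "(B, Y)"]) simp
  qed
  obtain g where g: "\<forall>\<alpha>\<in>Field r. fst (g \<alpha>) \<in> I \<and> (\<forall>\<beta>\<in>Field r. snd (g \<alpha>) \<beta> \<in> I) \<and> X \<alpha> \<subseteq> fst (g \<alpha>) \<union> diag_union r (Field r) (snd (g \<alpha>))"
    using bchoice[OF H] by (elim exE) (rule that)
  define U where "U = (\<lambda>\<gamma>. insert \<gamma> (underS r \<gamma>))"
  define Z where "Z = (\<lambda>\<gamma>. \<Union>\<alpha>\<in>U \<gamma>. (fst (g \<alpha>) \<union> (\<Union>\<beta>\<in>U \<gamma>. snd (g \<alpha>) \<beta>)))"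
  have US: "|U \<gamma>| <o r" if "\<gamma> \<in> Field r" for \<gamma>
    unfolding U_def by (rule under_small[OF C inf that])
  have UF: "U \<gamma> \<subseteq> Field r" if "\<gamma> \<in> Field r" for \<gamma>
    unfolding U_def insert_subset using that Order_Relation.underS_Field[of r \<gamma>] by (rule conjI)
  have gF: "fst (g \<alpha>) \<in> I" "\<forall>\<beta>\<in>Field r. snd (g \<alpha>) \<beta> \<in> I" if "\<alpha> \<in> Field r" for \<alpha>
    using g that by blast+
  have ZI: "\<forall>\<gamma>\<in>Field r. Z \<gamma> \<in> I"
  proof
    fix \<gamma> assume \<gamma>: "\<gamma> \<in> Field r"
    have "\<forall>\<alpha>\<in>U \<gamma>. fst (g \<alpha>) \<union> (\<Union>\<beta>\<in>U \<gamma>. snd (g \<alpha>) \<beta>) \<in> I"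
    proof
      fix \<alpha> assume a: "\<alpha> \<in> U \<gamma>"
      have aF: "\<alpha> \<in> Field r" using UF[OF \<gamma>] a by (rule subsetD)
      have "\<forall>\<beta>\<in>U \<gamma>. snd (g \<alpha>) \<beta> \<in> I"
      proof
        fix \<beta> assume "\<beta> \<in> U \<gamma>"
        then have "\<beta> \<in> Field r" using UF[OF \<gamma>] by (rule rev_subsetD)
        then show "snd (g \<alpha>) \<beta> \<in> I" using gF(2)[OF aF] by (rule bspec[rotated])
      qed
      then have "(\<Union>\<beta>\<in>U \<gamma>. snd (g \<alpha>) \<beta>) \<in> I" by (rule ideal_UN[OF I US[OF \<gamma>]])
      then show "fst (g \<alpha>) \<union> (\<Union>\<beta>\<in>U \<gamma>. snd (g \<alpha>) \<beta>) \<in> I" by (rule ideal_Un[OF I gF(1)[OF aF]])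
    qed
    then show "Z \<gamma> \<in> I" unfolding Z_def by (rule ideal_UN[OF I US[OF \<gamma>]])
  qed
  have sub: "diag_union r (Field r) X \<subseteq> diag_union r (Field r) Z"
  proof
    fix \<xi> assume "\<xi> \<in> diag_union r (Field r) X"
    then obtain \<alpha> where a: "\<xi> \<in> Field r" "(\<alpha>, \<xi>) \<in> r" "\<alpha> \<noteq> \<xi>" "\<alpha> \<in> Field r" "\<xi> \<in> X \<alpha>"
      unfolding diag_union_def by blast
    have "\<xi> \<in> fst (g \<alpha>) \<or> \<xi> \<in> diag_union r (Field r) (snd (g \<alpha>))" using g a by blast
    then show "\<xi> \<in> diag_union r (Field r) Z"
    proof
      assume "\<xi> \<in> fst (g \<alpha>)"
      then have "\<xi> \<in> Z \<alpha>" unfolding Z_def U_def by blast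
      then show ?thesis using a unfolding diag_union_def by blast
    next
      assume "\<xi> \<in> diag_union r (Field r) (snd (g \<alpha>))"
      then obtain \<beta> where b: "(\<beta>, \<xi>) \<in> r" "\<beta> \<noteq> \<xi>" "\<beta> \<in> Field r" "\<xi> \<in> snd (g \<alpha>) \<beta>"
        unfolding diag_union_def by blast
      define \<gamma> where "\<gamma> = (if (\<alpha>, \<beta>) \<in> r then \<beta> else \<alpha>)"
      have tot: "(\<alpha>, \<beta>) \<in> r \<or> (\<beta>, \<alpha>) \<in> r"
        using wo_rel.TOTALS[of r] W a(4) b(3) unfolding wo_rel_def by blast
      have "\<alpha> \<in> U \<gamma> \<and> \<beta> \<in> U \<gamma>" unfolding U_def underS_def \<gamma>_def using tot by auto
      then have "\<xi> \<in> Z \<gamma>" unfolding Z_def using b by blast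
      moreover have "(\<gamma>, \<xi>) \<in> r" "\<gamma> \<noteq> \<xi>" "\<gamma> \<in> Field r" unfolding \<gamma>_def using a b by auto
      ultimately show ?thesis using a unfolding diag_union_def by blast
    qed
  qed
  have "Field r \<noteq> {}" using inf by auto
  then obtain x where x: "x \<in> Field r" by blast
  have "{x} \<in> I" using ideal_single[OF I x] .
  then have "{} \<in> I" using ideal_sub[OF I] by blast
  moreover have "diag_union r (Field r) X \<subseteq> Field r" unfolding diag_union_def by blast
  ultimately show "diag_union r (Field r) X \<in> nclos r I" using sub ZI by (intro nclosI[of _ _ "{}" _ Z]) auto
qed


lemma pleasantD: "pleasant_ideal r I \<Longrightarrow> A \<in> I \<Longrightarrow> \<forall>\<alpha>\<in>Field r. X \<alpha> \<in> I \<Longrightarrow> diag_union r A X \<in> I"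
  unfolding pleasant_ideal_def by (elim conjE) simp

lemma nclos_proper:
  assumes P: "proper_ideal r I" and Pl: "pleasant_ideal r I" and C: "Card_order r"
    and unc: "\<not> countable (Field r)"
  shows "Field r \<notin> nclos r I"
proof
  assume "Field r \<in> nclos r I"
  then obtain B X where B: "B \<in> I" and X: "\<forall>\<alpha>\<in>Field r. X \<alpha> \<in> I"
    and cov: "Field r \<subseteq> B \<union> diag_union r (Field r) X"
    by (rule nclosE)
  have I: "is_ideal r I" using P unfolding proper_ideal_def by (elim conjE)
  define A where "A = rec_nat B (\<lambda>n S. S \<union> diag_union r S X)"
  have A0: "A 0 = B" and AS: "\<And>n. A (Suc n) = A n \<union> diag_union r (A n) X" unfolding A_def by simp_all
  have AI: "A n \<in> I" for n
  proof (induction n)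
    case 0 then show ?case using A0 B by simp
  next
    case (Suc n)
    have "diag_union r (A n) X \<in> I" by (rule pleasantD[OF Pl Suc X])
    then show ?case using AS Suc ideal_Un[OF I] by simp
  qed
  have "|UNIV::nat set| <o r" by (rule countable_small[OF C unc]) simp
  then have UI: "(\<Union>n. A n) \<in> I" using ideal_UN[OF I, of UNIV A] AI by simp
  have W: "Well_order r" using card_order_on_well_order_on[OF C] .
  have "\<xi> \<in> Field r \<longrightarrow> \<xi> \<in> (\<Union>n. A n)" for \<xi>
  proof (induction \<xi> rule: wo_rel.well_order_induct[of r])
    show "wo_rel r" using W unfolding wo_rel_def .
  next
    case (2 \<xi>)
    show ?case
    proof
      assume xi: "\<xi> \<in> Field r"
      show "\<xi> \<in> (\<Union>n. A n)"
      proof (cases "\<xi> \<in> B")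
        case True then show ?thesis using A0 by blast
      next
        case False
        then obtain \<alpha> where a: "(\<alpha>, \<xi>) \<in> r" "\<alpha> \<noteq> \<xi>" "\<alpha> \<in> Field r" "\<xi> \<in> X \<alpha>"
          using cov xi unfolding diag_union_def by blast
        then obtain n where "\<alpha> \<in> A n" using 2 by blast
        then have "\<xi> \<in> diag_union r (A n) X" using a xi unfolding diag_union_def by blast
        then have "\<xi> \<in> A (Suc n)" using AS by blast
        then show ?thesis by blast
      qed
    qed
  qed
  then have "Field r \<subseteq> (\<Union>n. A n)" by blast
  then have "Field r \<in> I" using ideal_sub[OF I UI] by blast
  then show False using P unfolding proper_ideal_def by (elim conjE) simp
qed

end

theorem theorem2p2:
  fixes r :: "'a rel" and I :: "'a set set"
  assumes "Card_order r" and "regularCard r" and "\<not> countable (Field r)"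
    and "proper_ideal r I" and "pleasant_ideal r I"
  shows "subnormal_ideal r I"
proof -
  have I: "is_ideal r I" using assms(4) unfolding proper_ideal_def by (elim conjE)
  have inf: "\<not> finite (Field r)" using assms(3) countable_finite by auto
  have "I \<subseteq> nclos r I"
  proof
    fix Y assume Y: "Y \<in> I"
    have "\<forall>\<alpha>\<in>Field r. {} \<in> I" using ideal_sub[OF I Y] by blast
    moreover have "Y \<subseteq> Field r" using ideal_Field[OF I Y] .
    ultimately show "Y \<in> nclos r I" using Y by (intro nclosI[of _ _ Y _ "\<lambda>_. {}"]) auto
  qed
  moreover have "proper_ideal r (nclos r I)"
    unfolding proper_ideal_def using nclos_ideal[OF I assms(1) inf] nclos_proper[OF assms(4,5,1,3)] by (rule conjI)
  moreover have "normal_ideal r (nclos r I)" using nclos_normal[OF I assms(1) inf] .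
  ultimately show ?thesis unfolding subnormal_ideal_def by (intro exI[of _ "nclos r I"] conjI)
qed

end
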